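(* Let $n=2m$ and let $G=(g[i,j])_{1\le i,j\le n}$ be a symmetric matrix of indeterminates ($g[i,j]=g[j,i]$). For distinct indices $i_1,\dots,i_n$ put $g[i_1,\dots,i_m\,|\,i_{m+1},\dots,i_n]=\det\big(g[i_p,i_{m+q}]\big)_{1\le p,q\le m}$. Let $\mathfrak S_n$ act by permuting indices, $g[i,j]\mapsto g[\sigma(i),\sigma(j)]$. Then the $\mathbb{Q}$-linear span of the orbit of $g[1,\dots,m\,|\,m+1,\dots,n]$ under $\mathfrak S_n$ is an irreducible representation of $\mathfrak S_n$ isomorphic to the Specht module of shape $[2^m]$; more precisely, the assignment $g[i_1,\dots,i_m\,|\,i_{m+1},\dots,i_n]\mapsto \Delta^x(i_1,\dots,i_m)\,\Delta^x(i_{m+1},\dots,i_n)$ extends to an $\mathfrak S_n$-equivariant linear isomorphism onto the span of the polynomials $\Delta^x(i_1,\dots,i_m)\Delta^x(i_{m+1},\dots,i_n)$.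
   Context: $\Delta^x(i_1,\dots,i_k)=\prod_{1\le p<q\le k}(x_{i_p}-x_{i_q})$; $\mathfrak S_n$ acts on polynomials in $x_1,\dots,x_n$ by $x_i\mapsto x_{\sigma(i)}$. The shape $[2^m]$ consists of $m$ rows of length $2$ (two columns of height $m$); its Specht module is the span of the polynomials $\Delta^x(i_1,\dots,i_m)\Delta^x(i_{m+1},\dots,i_n)$ for $(i_1,\dots,i_n)$ ranging over permutations of $1,\dots,n$. *)

theory Defs
  imports "HOL-Combinatorics.Permutations" "Jordan_Normal_Form.Determinant"
begin

(* Polynomials over Q are represented by their polynomial functions (Q is infinite,
   so this is faithful). A polynomial in the symmetric matrix of indeterminates
   g[i,j] = g[j,i] is a function of g :: nat => nat => rat that reads only the
   entries g i j with i <= j (the independent indeterminates). *)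

definition symm :: "(nat \<Rightarrow> nat \<Rightarrow> rat) \<Rightarrow> nat \<Rightarrow> nat \<Rightarrow> rat" where
  "symm g i j = g (min i j) (max i j)"

definition gbr :: "nat list \<Rightarrow> nat list \<Rightarrow> (nat \<Rightarrow> nat \<Rightarrow> rat) \<Rightarrow> rat" where
  "gbr is js g = det (mat (length is) (length is) (\<lambda>(p,q). symm g (is ! p) (js ! q)))"

definition Delta :: "nat list \<Rightarrow> (nat \<Rightarrow> rat) \<Rightarrow> rat" where
  "Delta is x = (\<Prod>(p,q)\<in>{(p,q). p < q \<and> q < length is}. x (is ! p) - x (is ! q))"

definition Sn :: "nat \<Rightarrow> (nat \<Rightarrow> nat) set" where
  "Sn n = {\<sigma>. \<sigma> permutes {1..n}}"

definition blk1 :: "nat \<Rightarrow> (nat \<Rightarrow> nat) \<Rightarrow> nat list" where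
  "blk1 m \<sigma> = map \<sigma> [1..<m+1]"

definition blk2 :: "nat \<Rightarrow> (nat \<Rightarrow> nat) \<Rightarrow> nat list" where
  "blk2 m \<sigma> = map \<sigma> [m+1..<2*m+1]"

definition gmono :: "nat \<Rightarrow> (nat \<Rightarrow> nat) \<Rightarrow> (nat \<Rightarrow> nat \<Rightarrow> rat) \<Rightarrow> rat" where
  "gmono m \<sigma> = gbr (blk1 m \<sigma>) (blk2 m \<sigma>)"

definition xmono :: "nat \<Rightarrow> (nat \<Rightarrow> nat) \<Rightarrow> (nat \<Rightarrow> rat) \<Rightarrow> rat" where
  "xmono m \<sigma> = (\<lambda>x. Delta (blk1 m \<sigma>) x * Delta (blk2 m \<sigma>) x)"

definition act_g :: "(nat \<Rightarrow> nat) \<Rightarrow> ((nat \<Rightarrow> nat \<Rightarrow> rat) \<Rightarrow> rat) \<Rightarrow> (nat \<Rightarrow> nat \<Rightarrow> rat) \<Rightarrow> rat" where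
  "act_g \<sigma> p = (\<lambda>g. p (\<lambda>i j. symm g (\<sigma> i) (\<sigma> j)))"

definition act_x :: "(nat \<Rightarrow> nat) \<Rightarrow> ((nat \<Rightarrow> rat) \<Rightarrow> rat) \<Rightarrow> (nat \<Rightarrow> rat) \<Rightarrow> rat" where
  "act_x \<sigma> p = (\<lambda>x. p (x \<circ> \<sigma>))"

definition qspan :: "('a \<Rightarrow> rat) set \<Rightarrow> ('a \<Rightarrow> rat) set" where
  "qspan B = {f. \<exists>S c. finite S \<and> S \<subseteq> B \<and> f = (\<lambda>x. \<Sum>b\<in>S. c b * b x)}"

definition qsubspace :: "('a \<Rightarrow> rat) set \<Rightarrow> bool" where
  "qsubspace W \<longleftrightarrow> (\<lambda>x. 0) \<in> W \<and> (\<forall>a\<in>W. \<forall>b\<in>W. (\<lambda>x. a x + b x) \<in> W)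
      \<and> (\<forall>c. \<forall>a\<in>W. (\<lambda>x. c * a x) \<in> W)"

definition qlinear_on :: "('a \<Rightarrow> rat) set \<Rightarrow> (('a \<Rightarrow> rat) \<Rightarrow> ('b \<Rightarrow> rat)) \<Rightarrow> bool" where
  "qlinear_on V \<Phi> \<longleftrightarrow> (\<forall>a\<in>V. \<forall>b\<in>V. \<Phi> (\<lambda>x. a x + b x) = (\<lambda>y. \<Phi> a y + \<Phi> b y))
      \<and> (\<forall>c. \<forall>a\<in>V. \<Phi> (\<lambda>x. c * a x) = (\<lambda>y. c * \<Phi> a y))"

definition Vg :: "nat \<Rightarrow> ((nat \<Rightarrow> nat \<Rightarrow> rat) \<Rightarrow> rat) set" where
  "Vg m = qspan (gmono m ` Sn (2*m))"

definition Specht2 :: "nat \<Rightarrow> ((nat \<Rightarrow> rat) \<Rightarrow> rat) set" where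
  "Specht2 m = qspan (xmono m ` Sn (2*m))"

end

theory Submission
  imports Defs
begin



lemma symm_sym: "symm g a b = symm g b a"
  by (simp add: symm_def min.commute max.commute)

lemma symm_of_sym: "(\<And>a b. h a b = h b a) \<Longrightarrow> symm h = h"
  by (intro ext) (simp add: symm_def min_def max_def)

lemma symm_comp: "symm (\<lambda>i j. symm g (f i) (f j)) = (\<lambda>i j. symm g (f i) (f j))"
  by (rule symm_of_sym) (simp add: symm_sym)

lemma act_g_comp: "act_g \<sigma> (act_g \<tau> v) = act_g (\<sigma> \<circ> \<tau>) v"
  by (simp add: act_g_def symm_comp)

lemma gbr_act:
  assumes "length js = length is"
  shows "gbr is js (\<lambda>i j. symm g (\<sigma> i) (\<sigma> j)) = gbr (map \<sigma> is) (map \<sigma> js) g"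
  unfolding gbr_def symm_comp
  by (rule arg_cong[where f=det], rule cong_mat) (use assms in auto)

lemma length_blk[simp]: "length (blk1 m \<sigma>) = m" "length (blk2 m \<sigma>) = m"
  by (simp_all add: blk1_def blk2_def)

lemma act_gmono: "act_g \<sigma> (gmono m \<tau>) = gmono m (\<sigma> \<circ> \<tau>)"
  unfolding act_g_def gmono_def
  by (intro ext, subst gbr_act) (simp_all add: blk1_def blk2_def)



lemma qsub_sum:
  assumes W: "qsubspace W" and fin: "finite I" and f: "\<forall>i\<in>I. f i \<in> W"
  shows "(\<lambda>x. \<Sum>i\<in>I. c i * f i x) \<in> W"
  using fin f
proof (induction I rule: finite_induct)
  case empty
  then show ?case using W by (simp add: qsubspace_def)
next
  case (insert i I)
  have a: "(\<lambda>x. c i * f i x) \<in> W" using W insert by (simp add: qsubspace_def)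
  have b: "(\<lambda>x. \<Sum>i\<in>I. c i * f i x) \<in> W" using insert by simp
  have "(\<lambda>x. (\<lambda>x. c i * f i x) x + (\<lambda>x. \<Sum>i\<in>I. c i * f i x) x) \<in> W"
    using W a b unfolding qsubspace_def by (meson)
  then show ?case using insert by simp
qed

lemma qspan_base: "b \<in> B \<Longrightarrow> b \<in> qspan B"
  unfolding qspan_def
  by (rule CollectI, rule exI[of _ "{b}"], rule exI[of _ "\<lambda>_. 1"]) auto

lemma qspan_sub: "qsubspace (qspan B)"
  unfolding qsubspace_def
proof (intro conjI ballI allI)
  show "(\<lambda>x. 0) \<in> qspan B" unfolding qspan_def
    by (rule CollectI, rule exI[of _ "{}"]) auto
next
  fix a b assume a: "a \<in> qspan B" and b: "b \<in> qspan B"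
  from a obtain S1 c1 where S1: "finite S1" "S1 \<subseteq> B" "a = (\<lambda>x. \<Sum>b\<in>S1. c1 b * b x)"
    unfolding qspan_def by blast
  from b obtain S2 c2 where S2: "finite S2" "S2 \<subseteq> B" "b = (\<lambda>x. \<Sum>b\<in>S2. c2 b * b x)"
    unfolding qspan_def by blast
  define c where "c = (\<lambda>b. (if b \<in> S1 then c1 b else 0) + (if b \<in> S2 then c2 b else 0))"
  have "(\<lambda>x. a x + b x) = (\<lambda>x. \<Sum>b\<in>S1\<union>S2. c b * b x)"
  proof
    fix x
    have "(\<Sum>b\<in>S1\<union>S2. c b * b x) = (\<Sum>b\<in>S1\<union>S2. (if b \<in> S1 then c1 b * b x else 0))
       + (\<Sum>b\<in>S1\<union>S2. (if b \<in> S2 then c2 b * b x else 0))"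
      unfolding c_def sum.distrib[symmetric] by (rule sum.cong) (auto simp: distrib_right)
    also have "\<dots> = (\<Sum>b\<in>S1. c1 b * b x) + (\<Sum>b\<in>S2. c2 b * b x)"
      using S1 S2 by (simp add: sum.If_cases Int_absorb1 Int_absorb2)
    finally show "a x + b x = (\<Sum>b\<in>S1\<union>S2. c b * b x)" using S1 S2 by simp
  qed
  then show "(\<lambda>x. a x + b x) \<in> qspan B" unfolding qspan_def using S1 S2
    by (intro CollectI exI[of _ "S1\<union>S2"] exI[of _ c]) auto
next
  fix k a assume a: "a \<in> qspan B"
  from a obtain S1 c1 where S1: "finite S1" "S1 \<subseteq> B" "a = (\<lambda>x. \<Sum>b\<in>S1. c1 b * b x)"
    unfolding qspan_def by blast
  have "(\<lambda>x. k * a x) = (\<lambda>x. \<Sum>b\<in>S1. (k * c1 b) * b x)"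
    using S1 by (simp add: sum_distrib_left mult.assoc)
  then show "(\<lambda>x. k * a x) \<in> qspan B" unfolding qspan_def using S1
    by (intro CollectI exI[of _ "S1"] exI[of _ "\<lambda>b. k * c1 b"]) auto
qed

lemma qspan_least:
  assumes W: "qsubspace W" and B: "B \<subseteq> W"
  shows "qspan B \<subseteq> W"
proof
  fix v assume "v \<in> qspan B"
  then obtain S c where S: "finite S" "S \<subseteq> B" "v = (\<lambda>x. \<Sum>b\<in>S. c b * b x)"
    unfolding qspan_def by blast
  show "v \<in> W" unfolding S(3) by (rule qsub_sum[OF W S(1)]) (use S B in auto)
qed

lemma qsub_add: "qsubspace W \<Longrightarrow> a \<in> W \<Longrightarrow> b \<in> W \<Longrightarrow> (\<lambda>x. a x + b x) \<in> W"
  unfolding qsubspace_def by blast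
lemma qsub_smult: "qsubspace W \<Longrightarrow> a \<in> W \<Longrightarrow> (\<lambda>x. c * a x) \<in> W"
  unfolding qsubspace_def by blast
lemma qsub_zero: "qsubspace W \<Longrightarrow> (\<lambda>x. 0) \<in> W"
  unfolding qsubspace_def by blast
lemma qsub_diff: "qsubspace W \<Longrightarrow> a \<in> W \<Longrightarrow> b \<in> W \<Longrightarrow> (\<lambda>x. a x - b x) \<in> W"
proof -
  assume W: "qsubspace W" and a: "a \<in> W" and b: "b \<in> W"
  have "(\<lambda>x. (-1) * b x) \<in> W" by (rule qsub_smult[OF W b])
  from qsub_add[OF W a this] show ?thesis by simp
qed



lemma det_perm_rows_cols:
  fixes A :: "'a::comm_ring_1 mat"
  assumes A: "A \<in> carrier_mat m m" and a: "\<alpha> permutes {0..<m}" and b: "\<beta> permutes {0..<m}"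
  shows "det (mat m m (\<lambda>(i,j). A $$ (\<alpha> i, \<beta> j))) = signof \<alpha> * signof \<beta> * det A"
proof -
  define B where "B = mat m m (\<lambda>(i,j). A $$ (i, \<beta> j))"
  have B: "B \<in> carrier_mat m m" unfolding B_def by simp
  have aim: "\<And>i. i < m \<Longrightarrow> \<alpha> i < m" using a by (meson atLeastLessThan_iff permutes_in_image zero_le)
  have bim: "\<And>i. i < m \<Longrightarrow> \<beta> i < m" using b by (meson atLeastLessThan_iff permutes_in_image zero_le)
  have 1: "mat m m (\<lambda>(i,j). A $$ (\<alpha> i, \<beta> j)) = mat m m (\<lambda>(i,j). B $$ (\<alpha> i, j))"
    by (rule cong_mat) (auto simp: B_def aim)
  have 2: "det B = signof \<beta> * det A"
  proof -
    have "transpose_mat B = mat m m (\<lambda>(i,j). transpose_mat A $$ (\<beta> i, j))"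
      by (rule eq_matI) (use A bim in \<open>auto simp: B_def\<close>)
    then have "det (transpose_mat B) = signof \<beta> * det (transpose_mat A)"
      using det_permute_rows[OF _ b, of "transpose_mat A"] A by simp
    then show ?thesis using det_transpose[OF A] det_transpose[OF B] by simp
  qed
  show ?thesis unfolding 1 det_permute_rows[OF B a] 2 by simp
qed

definition Pm :: "nat \<Rightarrow> (nat \<Rightarrow> nat) set" where "Pm m = {p. p permutes {0..<m}}"

definition comb :: "nat \<Rightarrow> (nat \<Rightarrow> nat) \<Rightarrow> (nat \<Rightarrow> nat) \<Rightarrow> nat \<Rightarrow> nat" where
  "comb m \<alpha> \<beta> i = (if 1 \<le> i \<and> i \<le> m then \<alpha> (i-1) + 1
      else if m < i \<and> i \<le> 2*m then \<beta> (i-m-1) + m + 1 else i)"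

lemma Pm_im: "\<alpha> \<in> Pm m \<Longrightarrow> i < m \<Longrightarrow> \<alpha> i < m"
  using permutes_in_image[of \<alpha> "{0..<m}" i] by (simp add: Pm_def)

lemma comb_comp:
  assumes "\<And>i. i < m \<Longrightarrow> \<alpha>' i < m" "\<And>i. i < m \<Longrightarrow> \<beta>' i < m"
  shows "comb m \<alpha> \<beta> \<circ> comb m \<alpha>' \<beta>' = comb m (\<alpha> \<circ> \<alpha>') (\<beta> \<circ> \<beta>')"
proof
  fix i
  show "(comb m \<alpha> \<beta> \<circ> comb m \<alpha>' \<beta>') i = comb m (\<alpha> \<circ> \<alpha>') (\<beta> \<circ> \<beta>') i"
  proof (cases "1 \<le> i \<and> i \<le> m")
    case True
    then have "\<alpha>' (i-1) < m" using assms(1)[of "i-1"] by linarith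
    then show ?thesis using True by (simp add: comb_def)
  next
    case F1: False
    show ?thesis
    proof (cases "m < i \<and> i \<le> 2*m")
      case True
      then have "\<beta>' (i-m-1) < m" using assms(2)[of "i-m-1"] by linarith
      then show ?thesis using True F1 by (simp add: comb_def)
    next
      case False
      have e: "comb m \<alpha>' \<beta>' i = i" "comb m \<alpha> \<beta> i = i" "comb m (\<alpha> \<circ> \<alpha>') (\<beta> \<circ> \<beta>') i = i"
        using F1 False unfolding comb_def by auto
      then show ?thesis by simp
    qed
  qed
qed

lemma comb_id: "comb m id id = id"
  by (auto simp: comb_def fun_eq_iff)

lemma comb_inv_o:
  assumes "\<alpha> \<in> Pm m" "\<beta> \<in> Pm m"
  shows "comb m \<alpha> \<beta> \<circ> comb m (Hilbert_Choice.inv \<alpha>) (Hilbert_Choice.inv \<beta>) = id"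
        "comb m (Hilbert_Choice.inv \<alpha>) (Hilbert_Choice.inv \<beta>) \<circ> comb m \<alpha> \<beta> = id"
proof -
  have ia: "Hilbert_Choice.inv \<alpha> \<in> Pm m" "Hilbert_Choice.inv \<beta> \<in> Pm m" using assms by (auto simp: Pm_def permutes_inv)
  show "comb m \<alpha> \<beta> \<circ> comb m (Hilbert_Choice.inv \<alpha>) (Hilbert_Choice.inv \<beta>) = id"
    using assms ia by (subst comb_comp) (auto simp: Pm_im Pm_def permutes_inv_o comb_id)
  show "comb m (Hilbert_Choice.inv \<alpha>) (Hilbert_Choice.inv \<beta>) \<circ> comb m \<alpha> \<beta> = id"
    using assms ia by (subst comb_comp) (auto simp: Pm_im Pm_def permutes_inv_o comb_id)
qed

lemma comb_Sn:
  assumes "\<alpha> \<in> Pm m" "\<beta> \<in> Pm m"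
  shows "comb m \<alpha> \<beta> \<in> Sn (2*m)"
proof -
  have "bij (comb m \<alpha> \<beta>)"
    using comb_inv_o[OF assms] by (metis o_bij)
  moreover have "\<forall>x. x \<notin> {1..2*m} \<longrightarrow> comb m \<alpha> \<beta> x = x"
    by (auto simp: comb_def)
  ultimately show ?thesis unfolding Sn_def permutes_def bij_iff by blast
qed

lemma comb_inv:
  assumes "\<alpha> \<in> Pm m" "\<beta> \<in> Pm m"
  shows "Hilbert_Choice.inv (comb m \<alpha> \<beta>) = comb m (Hilbert_Choice.inv \<alpha>) (Hilbert_Choice.inv \<beta>)"
  using comb_inv_o[OF assms] by (rule inv_unique_comp)

lemma gmono_comb:
  assumes a: "\<alpha> \<in> Pm m" and b: "\<beta> \<in> Pm m"
  shows "gmono m (comb m \<alpha> \<beta>) = (\<lambda>g. signof \<alpha> * signof \<beta> * gmono m id g)"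
proof
  fix g
  define A where "A = mat m m (\<lambda>(p,q). symm g (p+1) (q+m+1))"
  have A: "A \<in> carrier_mat m m" unfolding A_def by simp
  have 1: "gmono m id g = det A"
    unfolding gmono_def gbr_def A_def blk1_def blk2_def
    by (rule arg_cong[where f=det], rule cong_mat) (auto simp del: upt_Suc simp: add.commute)
  have 2: "gmono m (comb m \<alpha> \<beta>) g = det (mat m m (\<lambda>(i,j). A $$ (\<alpha> i, \<beta> j)))"
    unfolding gmono_def gbr_def blk1_def blk2_def
    by (rule arg_cong[where f=det], rule cong_mat)
       (use a b in \<open>auto simp del: upt_Suc simp: A_def Pm_im comb_def add.commute add.left_commute\<close>)
  show "gmono m (comb m \<alpha> \<beta>) g = signof \<alpha> * signof \<beta> * gmono m id g"
    unfolding 1 2 by (rule det_perm_rows_cols[OF A]) (use a b in \<open>auto simp: Pm_def\<close>)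
qed



definition mono :: "nat \<Rightarrow> (nat \<Rightarrow> nat) \<Rightarrow> (nat \<Rightarrow> nat \<Rightarrow> rat) \<Rightarrow> rat" where
  "mono m \<nu> g = (\<Prod>p\<in>{1..m}. symm g (\<nu> p) (\<nu> (m+p)))"

definition match :: "nat \<Rightarrow> (nat \<Rightarrow> nat) \<Rightarrow> nat set set" where
  "match m \<nu> = (\<lambda>p. {\<nu> p, \<nu> (m+p)}) ` {1..m}"

definition P0 :: "nat \<Rightarrow> nat \<Rightarrow> nat \<Rightarrow> rat" where
  "P0 m i j = (if {i,j} \<in> match m id then 1 else 0)"

definition pt :: "nat \<Rightarrow> (nat \<Rightarrow> nat) \<Rightarrow> nat \<Rightarrow> nat \<Rightarrow> rat" where
  "pt m \<rho> = (\<lambda>i j. P0 m (\<rho> i) (\<rho> j))"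

lemma act_mono: "act_g \<sigma> (mono m \<nu>) = mono m (\<sigma> \<circ> \<nu>)"
  by (simp add: act_g_def mono_def symm_comp fun_eq_iff)

lemma P0_sym: "P0 m a b = P0 m b a"
  by (simp add: P0_def insert_commute)

lemma symm_pt: "symm (pt m \<rho>) = pt m \<rho>"
  by (rule symm_of_sym) (simp add: pt_def P0_sym)

lemma act_pt: "act_g \<pi> u (pt m \<rho>) = u (pt m (\<rho> \<circ> \<pi>))"
  by (simp add: act_g_def symm_pt) (simp add: pt_def)

lemma prod_ind: "finite A \<Longrightarrow> (\<Prod>x\<in>A. if P x then (1::'a::comm_semiring_1) else 0) = (if \<forall>x\<in>A. P x then 1 else 0)"
  by (induction A rule: finite_induct) auto

lemma Sn_bij: "\<nu> \<in> Sn n \<Longrightarrow> bij \<nu>"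
  by (simp add: Sn_def permutes_bij)

lemma Sn_inv: "\<nu> \<in> Sn n \<Longrightarrow> Hilbert_Choice.inv \<nu> \<in> Sn n"
  by (simp add: Sn_def permutes_inv)

lemma match_comp: "match m (f \<circ> \<nu>) = (\<lambda>e. f ` e) ` match m \<nu>"
  by (simp add: match_def image_image)

lemma mono_pt:
  assumes \<nu>: "\<nu> \<in> Sn (2*m)" and \<rho>: "\<rho> \<in> Sn (2*m)"
  shows "mono m \<nu> (pt m \<rho>) = (if match m \<nu> \<subseteq> match m (Hilbert_Choice.inv \<rho>) then 1 else 0)"
proof -
  have b: "bij \<rho>" using \<rho> by (rule Sn_bij)
  have key: "{\<rho> (\<nu> p), \<rho> (\<nu> (m+p))} \<in> match m id \<longleftrightarrow> {\<nu> p, \<nu> (m+p)} \<in> match m (Hilbert_Choice.inv \<rho>)" for p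
  proof -
    have "match m (Hilbert_Choice.inv \<rho>) = (\<lambda>e. Hilbert_Choice.inv \<rho> ` e) ` match m id"
      using match_comp[of m "Hilbert_Choice.inv \<rho>" id] by simp
    moreover have "{\<nu> p, \<nu> (m+p)} = Hilbert_Choice.inv \<rho> ` {\<rho> (\<nu> p), \<rho> (\<nu> (m+p))}"
      using b by (simp add: bij_is_inj)
    moreover have "inj (\<lambda>e. Hilbert_Choice.inv \<rho> ` e)"
    proof -
      have "inj (Hilbert_Choice.inv \<rho>)" using b by (simp add: bij_imp_bij_inv bij_is_inj)
      then show ?thesis by (simp add: inj_def inj_image_eq_iff)
    qed
    ultimately show ?thesis by (metis (no_types, lifting) inj_image_mem_iff)
  qed
  have "mono m \<nu> (pt m \<rho>) = (\<Prod>p\<in>{1..m}. if {\<nu> p, \<nu> (m+p)} \<in> match m (Hilbert_Choice.inv \<rho>) then 1 else 0)"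
    unfolding mono_def symm_pt by (rule prod.cong) (simp_all add: pt_def P0_def key)
  also have "\<dots> = (if match m \<nu> \<subseteq> match m (Hilbert_Choice.inv \<rho>) then 1 else 0)"
    by (subst prod_ind) (auto simp: match_def)
  finally show ?thesis .
qed

lemma edge_inj:
  assumes \<nu>: "\<nu> \<in> Sn (2*m)"
  shows "inj_on (\<lambda>p. {\<nu> p, \<nu> (m+p)}) {1..m}"
proof
  fix p q assume p: "p \<in> {1..m}" and q: "q \<in> {1..m}" and e: "{\<nu> p, \<nu> (m+p)} = {\<nu> q, \<nu> (m+q)}"
  have i: "inj \<nu>" using Sn_bij[OF \<nu>] bij_is_inj by blast
  from e have "(\<nu> p = \<nu> q \<and> \<nu> (m+p) = \<nu> (m+q)) \<or> (\<nu> p = \<nu> (m+q) \<and> \<nu> (m+p) = \<nu> q)"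
    by (auto simp: doubleton_eq_iff)
  then have "(p = q) \<or> (p = m+q \<and> m+p = q)" using i by (auto dest: injD)
  then show "p = q" using p q by auto
qed

lemma card_match: "\<nu> \<in> Sn (2*m) \<Longrightarrow> card (match m \<nu>) = m"
  unfolding match_def by (subst card_image[OF edge_inj]) auto

lemma mono_as_match:
  assumes \<nu>: "\<nu> \<in> Sn (2*m)"
  shows "mono m \<nu> g = (\<Prod>e\<in>match m \<nu>. g (Min e) (Max e))"
  unfolding match_def mono_def
  by (subst prod.reindex[OF edge_inj[OF \<nu>]]) (simp add: symm_def)

lemma mono_match:
  assumes \<nu>: "\<nu> \<in> Sn (2*m)" and \<nu>': "\<nu>' \<in> Sn (2*m)" and s: "match m \<nu> \<subseteq> match m \<nu>'"
  shows "mono m \<nu> = mono m \<nu>'"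
proof -
  have "match m \<nu> = match m \<nu>'"
    using s card_match[OF \<nu>] card_match[OF \<nu>'] by (intro card_subset_eq) (auto simp: match_def)
  then show ?thesis by (simp add: fun_eq_iff mono_as_match[OF \<nu>] mono_as_match[OF \<nu>'])
qed

lemma mono_pt_inv:
  assumes b: "b \<in> mono m ` Sn (2*m)" and \<nu>: "\<nu> \<in> Sn (2*m)"
  shows "b (pt m (Hilbert_Choice.inv \<nu>)) = (if b = mono m \<nu> then 1 else 0)"
proof -
  obtain \<nu>' where \<nu>': "\<nu>' \<in> Sn (2*m)" and bb: "b = mono m \<nu>'" using b by blast
  have ii: "Hilbert_Choice.inv (Hilbert_Choice.inv \<nu>) = \<nu>" using Sn_bij[OF \<nu>] by (simp add: inv_inv_eq)
  have e: "b (pt m (Hilbert_Choice.inv \<nu>)) = (if match m \<nu>' \<subseteq> match m \<nu> then 1 else 0)"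
    unfolding bb by (subst mono_pt[OF \<nu>' Sn_inv[OF \<nu>]]) (simp add: ii)
  show ?thesis
  proof (cases "match m \<nu>' \<subseteq> match m \<nu>")
    case True
    then show ?thesis using e mono_match[OF \<nu>' \<nu> True] bb by simp
  next
    case False
    have "b \<noteq> mono m \<nu>"
    proof
      assume "b = mono m \<nu>"
      then have "mono m \<nu>' (pt m (Hilbert_Choice.inv \<nu>)) = mono m \<nu> (pt m (Hilbert_Choice.inv \<nu>))" using bb by simp
      then show False using False mono_pt[OF \<nu>' Sn_inv[OF \<nu>]] mono_pt[OF \<nu> Sn_inv[OF \<nu>]] ii by simp
    qed
    then show ?thesis using e False by simp
  qed
qed

lemma E_lemma:
  assumes u: "u \<in> qspan (mono m ` Sn (2*m))" and z: "\<forall>\<rho>\<in>Sn (2*m). u (pt m \<rho>) = 0"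
  shows "u = (\<lambda>g. 0)"
proof -
  obtain S c where S: "finite S" "S \<subseteq> mono m ` Sn (2*m)" and uu: "u = (\<lambda>x. \<Sum>b\<in>S. c b * b x)"
    using u unfolding qspan_def by blast
  have "c b = 0" if b: "b \<in> S" for b
  proof -
    obtain \<nu> where \<nu>: "\<nu> \<in> Sn (2*m)" and bb: "b = mono m \<nu>" using b S by blast
    have "u (pt m (Hilbert_Choice.inv \<nu>)) = (\<Sum>b'\<in>S. c b' * (if b' = b then 1 else 0))"
      unfolding uu using S bb \<nu> by (intro sum.cong refl) (auto simp: mono_pt_inv)
    also have "\<dots> = c b" using b S by (simp add: if_distrib sum.delta cong: if_cong)
    finally show ?thesis using z Sn_inv[OF \<nu>] by simp
  qed
  then show ?thesis unfolding uu by (simp add: fun_eq_iff)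
qed

lemma gmono_id_det: "gmono m id g = det (mat m m (\<lambda>(p,q). symm g (p+1) (q+m+1)))"
  unfolding gmono_def gbr_def blk1_def blk2_def
  by (rule arg_cong[where f=det], rule cong_mat) (auto simp del: upt_Suc simp: add.commute)

lemma gmono_leibniz: "gmono m id = (\<lambda>g. \<Sum>p\<in>Pm m. signof p * mono m (comb m id p) g)"
proof
  fix g
  have "gmono m id g = (\<Sum>p\<in>Pm m. signof p * (\<Prod>i=0..<m. symm g (i+1) (p i + m + 1)))"
    unfolding gmono_id_det by (subst det_def'[of _ m]) (auto simp: Pm_def intro!: sum.cong prod.cong)
  also have "\<dots> = (\<Sum>p\<in>Pm m. signof p * mono m (comb m id p) g)"
  proof (intro sum.cong refl arg_cong2[where f="(*)"])
    fix p assume p: "p \<in> Pm m"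
    have "mono m (comb m id p) g = (\<Prod>q\<in>{Suc 0..<Suc m}. symm g (comb m id p q) (comb m id p (m+q)))"
      unfolding mono_def by (simp add: atLeastLessThanSuc_atLeastAtMost)
    also have "\<dots> = (\<Prod>i\<in>{0..<m}. symm g (comb m id p (Suc i)) (comb m id p (m + Suc i)))"
      by (rule prod.shift_bounds_Suc_ivl)
    also have "\<dots> = (\<Prod>i=0..<m. symm g (i+1) (p i + m + 1))"
      by (rule prod.cong) (auto simp: comb_def)
    finally show "(\<Prod>i=0..<m. symm g (i+1) (p i + m + 1)) = mono m (comb m id p) g" by simp
  qed
  finally show "gmono m id g = (\<Sum>p\<in>Pm m. signof p * mono m (comb m id p) g)" .
qed

lemma finite_Pm: "finite (Pm m)"
  unfolding Pm_def by (simp add: finite_permutations)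

lemma gmono_in_mon:
  assumes \<sigma>: "\<sigma> \<in> Sn (2*m)"
  shows "gmono m \<sigma> \<in> qspan (mono m ` Sn (2*m))"
proof -
  have "gmono m \<sigma> = act_g \<sigma> (gmono m id)" by (simp add: act_gmono)
  also have "\<dots> = (\<lambda>g. \<Sum>p\<in>Pm m. signof p * mono m (\<sigma> \<circ> comb m id p) g)"
    unfolding gmono_leibniz by (simp add: act_g_def mono_def symm_comp)
  also have "\<dots> \<in> qspan (mono m ` Sn (2*m))"
  proof (rule qsub_sum[OF qspan_sub finite_Pm], intro ballI qspan_base imageI)
    fix p assume p: "p \<in> Pm m"
    have "id \<in> Pm m" by (simp add: Pm_def permutes_id)
    then have "comb m id p \<in> Sn (2*m)" using comb_Sn p by blast
    then show "\<sigma> \<circ> comb m id p \<in> Sn (2*m)" using \<sigma> by (simp add: Sn_def permutes_compose)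
  qed
  finally show ?thesis .
qed

lemma Vg_in_mon: "Vg m \<subseteq> qspan (mono m ` Sn (2*m))"
  unfolding Vg_def by (rule qspan_least[OF qspan_sub]) (auto intro: gmono_in_mon)



definition flip :: "nat \<Rightarrow> nat set \<Rightarrow> nat \<Rightarrow> nat" where
  "flip m S i = (if 1 \<le> i \<and> i \<le> m \<and> i \<in> S then i + m
     else if m < i \<and> i \<le> 2*m \<and> i - m \<in> S then i - m else i)"

lemma flip_flip: "flip m S (flip m S i) = i"
  by (auto simp: flip_def)

lemma flip_pair: "q \<in> {1..m} \<Longrightarrow> flip m S ` {q, m+q} = {q, m+q}"
  by (auto simp: flip_def)

lemma P0_flip: "P0 m (flip m S a) (flip m S b) = P0 m a b"
proof -
  have "{flip m S a, flip m S b} = {q, m+q} \<longleftrightarrow> {a,b} = {q, m+q}" if q: "q \<in> {1..m}" for q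
  proof
    assume h: "{flip m S a, flip m S b} = {q, m+q}"
    have "{a,b} = flip m S ` {flip m S a, flip m S b}" by (simp add: flip_flip)
    also have "\<dots> = {q, m+q}" using h flip_pair[OF q] by simp
    finally show "{a,b} = {q, m+q}" .
  next
    assume h: "{a,b} = {q, m+q}"
    have "{flip m S a, flip m S b} = flip m S ` {a,b}" by simp
    also have "\<dots> = {q, m+q}" using h flip_pair[OF q] by simp
    finally show "{flip m S a, flip m S b} = {q, m+q}" .
  qed
  then have E: "(\<exists>q\<in>{1..m}. {flip m S a, flip m S b} = {q, m+q}) = (\<exists>q\<in>{1..m}. {a,b} = {q, m+q})"
    by blast
  show ?thesis unfolding P0_def match_def image_iff id_apply E by (rule refl)
qed

lemma pt_flip: "pt m (flip m S \<circ> \<rho>) = pt m \<rho>"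
  by (simp add: pt_def P0_flip fun_eq_iff)

lemma pt_id: "pt m id = P0 m"
  by (simp add: pt_def fun_eq_iff)

lemma Sn_range: "\<nu> \<in> Sn n \<Longrightarrow> i \<in> {1..n} \<Longrightarrow> \<nu> i \<in> {1..n}"
  unfolding Sn_def using permutes_in_image[of \<nu> "{1..n}" i] by simp

lemma Sn_out: "\<nu> \<in> Sn n \<Longrightarrow> i \<notin> {1..n} \<Longrightarrow> \<nu> i = i"
  unfolding Sn_def by (simp add: permutes_not_in)

lemma Sn_inj: "\<nu> \<in> Sn n \<Longrightarrow> inj \<nu>"
  using Sn_bij bij_is_inj by blast

lemma inj_endo_permutes:
  fixes f :: "'a \<Rightarrow> 'a"
  assumes "finite A" "inj_on f A" "f ` A \<subseteq> A" "\<And>x. x \<notin> A \<Longrightarrow> f x = x"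
  shows "f permutes A"
proof -
  have "f ` A = A" using assms by (intro endo_inj_surj) auto
  then show ?thesis by (intro bij_imp_permutes) (use assms in \<open>auto simp: bij_betw_def\<close>)
qed

lemma signof_transpose: "a \<noteq> b \<Longrightarrow> signof (transpose a b) = (-1::'a::ring_1)"
  by (simp add: sign_swap_id)

lemma comb_swapA:
  assumes "a \<in> {1..m}" "b \<in> {1..m}"
  shows "comb m (transpose (a-1) (b-1)) id i = (if i = a then b else if i = b then a else i)"
  using assms by (auto simp: comb_def transpose_def)

lemma comb_swapB:
  assumes "a \<in> {m+1..2*m}" "b \<in> {m+1..2*m}"
  shows "comb m id (transpose (a-m-1) (b-m-1)) i = (if i = a then b else if i = b then a else i)"
  using assms by (auto simp: comb_def transpose_def)

lemma anti_zero:
  assumes anti: "\<forall>\<alpha>\<in>Pm m. \<forall>\<beta>\<in>Pm m. act_g (comb m \<alpha> \<beta>) u = (\<lambda>g. signof \<alpha> * signof \<beta> * u g)"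
    and z: "u (P0 m) = 0" and \<rho>: "\<rho> \<in> Sn (2*m)"
  shows "u (pt m \<rho>) = 0"
proof -
  have F1: "u (pt m (r \<circ> comb m \<alpha> \<beta>)) = signof \<alpha> * signof \<beta> * u (pt m r)"
    if "\<alpha> \<in> Pm m" "\<beta> \<in> Pm m" for r \<alpha> \<beta>
  proof -
    have "act_g (comb m \<alpha> \<beta>) u = (\<lambda>g. signof \<alpha> * signof \<beta> * u g)" using anti that by blast
    then show ?thesis using act_pt[of "comb m \<alpha> \<beta>" u m r] by simp
  qed
  define \<nu> where "\<nu> = Hilbert_Choice.inv \<rho>"
  have \<nu>: "\<nu> \<in> Sn (2*m)" unfolding \<nu>_def by (rule Sn_inv[OF \<rho>])
  have r\<nu>: "\<rho> (\<nu> i) = i" for i unfolding \<nu>_def using Sn_bij[OF \<rho>] by (simp add: bij_is_surj surj_f_inv_f)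
  have \<nu>r: "\<nu> (\<rho> i) = i" for i unfolding \<nu>_def using Sn_bij[OF \<rho>] by (simp add: bij_is_inj inv_f_f)
  have idP: "id \<in> Pm m" by (simp add: Pm_def)
  show ?thesis
  proof (cases "\<exists>p\<in>{1..m}. (\<nu> p \<le> m) = (\<nu> (m+p) \<le> m)")
    case True
    then obtain p where p: "p \<in> {1..m}" and pe: "(\<nu> p \<le> m) = (\<nu> (m+p) \<le> m)" by blast
    define a where "a = \<nu> p"
    define b where "b = \<nu> (m+p)"
    have "p \<noteq> m + p" using p by auto
    then have ab: "a \<noteq> b" unfolding a_def b_def using inj_eq[OF Sn_inj[OF \<nu>]] by simp
    have ar: "a \<in> {1..2*m}" unfolding a_def using p by (intro Sn_range[OF \<nu>]) auto
    have br: "b \<in> {1..2*m}" unfolding b_def using p by (intro Sn_range[OF \<nu>]) auto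
    have ra: "\<rho> a = p" "\<rho> b = m + p" unfolding a_def b_def by (simp_all add: r\<nu>)
    obtain \<alpha> \<beta> where ab': "\<alpha> \<in> Pm m" "\<beta> \<in> Pm m" "signof \<alpha> * signof \<beta> = (-1::rat)"
      and tau: "\<And>i. comb m \<alpha> \<beta> i = (if i = a then b else if i = b then a else i)"
    proof (cases "a \<le> m")
      case True
      then have "b \<le> m" using pe unfolding a_def b_def by simp
      then have A: "a \<in> {1..m}" "b \<in> {1..m}" using ar br True by auto
      show ?thesis
      proof (rule that[OF _ idP])
        show "transpose (a-1) (b-1) \<in> Pm m" unfolding Pm_def using A by (intro CollectI permutes_swap_id) auto
        show "signof (transpose (a-1) (b-1)) * signof id = (-1::rat)"
          using A ab by (subst signof_transpose) auto
        show "comb m (transpose (a-1) (b-1)) id i = (if i = a then b else if i = b then a else i)" for i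
          by (rule comb_swapA[OF A])
      qed
    next
      case False
      then have "\<not> b \<le> m" using pe unfolding a_def b_def by simp
      then have B: "a \<in> {m+1..2*m}" "b \<in> {m+1..2*m}" using ar br False by auto
      show ?thesis
      proof (rule that[OF idP])
        show "transpose (a-m-1) (b-m-1) \<in> Pm m" unfolding Pm_def using B by (intro CollectI permutes_swap_id) auto
        show "signof id * signof (transpose (a-m-1) (b-m-1)) = (-1::rat)"
          using B ab by (subst signof_transpose) auto
        show "comb m id (transpose (a-m-1) (b-m-1)) i = (if i = a then b else if i = b then a else i)" for i
          by (rule comb_swapB[OF B])
      qed
    qed
    have fix_eq: "flip m {p} \<circ> (\<rho> \<circ> comb m \<alpha> \<beta>) = \<rho>"
    proof
      fix i
      show "(flip m {p} \<circ> (\<rho> \<circ> comb m \<alpha> \<beta>)) i = \<rho> i"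
      proof (cases "i = a \<or> i = b")
        case True
        then show ?thesis using p ra ab by (auto simp: tau flip_def)
      next
        case False
        have "\<rho> i \<noteq> p"
        proof
          assume "\<rho> i = p" then have "\<nu> (\<rho> i) = a" unfolding a_def by simp
          then show False using False \<nu>r[of i] by simp
        qed
        moreover have "\<rho> i \<noteq> m + p"
        proof
          assume "\<rho> i = m + p" then have "\<nu> (\<rho> i) = b" unfolding b_def by simp
          then show False using False \<nu>r[of i] by simp
        qed
        ultimately show ?thesis using False p by (auto simp: tau flip_def)
      qed
    qed
    have "u (pt m \<rho>) = u (pt m (\<rho> \<circ> comb m \<alpha> \<beta>))"
      using pt_flip[of m "{p}" "\<rho> \<circ> comb m \<alpha> \<beta>"] fix_eq by simp
    also have "\<dots> = - u (pt m \<rho>)" using F1[OF ab'(1,2)] ab'(3) by simp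
    finally show ?thesis by simp
  next
    case False
    then have c2: "\<And>p. p \<in> {1..m} \<Longrightarrow> (\<nu> p \<le> m) \<noteq> (\<nu> (m+p) \<le> m)" by blast
    define S where "S = {p. m < \<nu> p}"
    define \<pi> where "\<pi> = \<nu> \<circ> flip m S"
    have \<nu>rng: "\<And>i. i \<in> {1..2*m} \<Longrightarrow> \<nu> i \<in> {1..2*m}" using Sn_range[OF \<nu>] by blast
    have piA: "\<pi> i \<in> {1..m}" if i: "i \<in> {1..m}" for i
    proof (cases "i \<in> S")
      case True
      then have "flip m S i = i + m" using i by (simp add: flip_def)
      moreover have "\<nu> (m+i) \<le> m" using c2[OF i] True by (auto simp: S_def)
      moreover have "\<nu> (m+i) \<in> {1..2*m}" using i by (intro \<nu>rng) auto
      ultimately show ?thesis by (simp add: \<pi>_def add.commute)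
    next
      case False
      then have "flip m S i = i" using i by (simp add: flip_def)
      moreover have "\<nu> i \<in> {1..2*m}" using i by (intro \<nu>rng) auto
      ultimately show ?thesis using False by (simp add: \<pi>_def S_def)
    qed
    have piB: "\<pi> i \<in> {m+1..2*m}" if i: "i \<in> {m+1..2*m}" for i
    proof -
      define q where "q = i - m"
      have q: "q \<in> {1..m}" "i = m + q" using i unfolding q_def by auto
      show ?thesis
      proof (cases "q \<in> S")
        case True
        then have "flip m S i = q" using q by (simp add: flip_def)
        moreover have "\<nu> q \<in> {1..2*m}" using q by (intro \<nu>rng) auto
        ultimately show ?thesis using True by (simp add: \<pi>_def S_def)
      next
        case False
        then have "flip m S i = i" using q by (simp add: flip_def)
        moreover have "m < \<nu> (m+q)" using c2[OF q(1)] False by (auto simp: S_def)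
        moreover have "\<nu> i \<in> {1..2*m}" using i by (intro \<nu>rng) auto
        ultimately show ?thesis using q by (simp add: \<pi>_def)
      qed
    qed
    have piO: "\<pi> i = i" if i: "i \<notin> {1..2*m}" for i
    proof -
      have "flip m S i = i" using i by (auto simp: flip_def)
      then show ?thesis using Sn_out[OF \<nu> i] by (simp add: \<pi>_def)
    qed
    have finj: "inj (flip m S)"
    proof (rule injI)
      fix x y assume "flip m S x = flip m S y"
      then have "flip m S (flip m S x) = flip m S (flip m S y)" by simp
      then show "x = y" by (simp add: flip_flip)
    qed
    have piinj: "inj \<pi>" unfolding \<pi>_def
      by (rule inj_compose[OF Sn_inj[OF \<nu>] finj])
    define \<alpha> where "\<alpha> = (\<lambda>p. if p < m then \<pi> (p+1) - 1 else p)"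
    define \<beta> where "\<beta> = (\<lambda>q. if q < m then \<pi> (q+m+1) - m - 1 else q)"
    have \<alpha>P: "\<alpha> \<in> Pm m" unfolding Pm_def
    proof (rule CollectI, rule inj_endo_permutes)
      show "inj_on \<alpha> {0..<m}"
      proof (rule inj_onI)
        fix x y assume x: "x \<in> {0..<m}" and y: "y \<in> {0..<m}" and e: "\<alpha> x = \<alpha> y"
        have "\<pi> (x+1) \<in> {1..m}" "\<pi> (y+1) \<in> {1..m}" using piA[of "x+1"] piA[of "y+1"] x y by auto
        then have "\<pi> (x+1) = \<pi> (y+1)" using e x y by (auto simp: \<alpha>_def)
        then show "x = y" using inj_eq[OF piinj] by simp
      qed
      show "\<alpha> ` {0..<m} \<subseteq> {0..<m}"
      proof
        fix y assume "y \<in> \<alpha> ` {0..<m}"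
        then obtain x where x: "x < m" "y = \<alpha> x" by auto
        have "\<pi> (x+1) \<in> {1..m}" using piA[of "x+1"] x by auto
        then show "y \<in> {0..<m}" using x by (auto simp: \<alpha>_def)
      qed
    qed (auto simp: \<alpha>_def)
    have \<beta>P: "\<beta> \<in> Pm m" unfolding Pm_def
    proof (rule CollectI, rule inj_endo_permutes)
      show "inj_on \<beta> {0..<m}"
      proof (rule inj_onI)
        fix x y assume x: "x \<in> {0..<m}" and y: "y \<in> {0..<m}" and e: "\<beta> x = \<beta> y"
        have "\<pi> (x+m+1) \<in> {m+1..2*m}" "\<pi> (y+m+1) \<in> {m+1..2*m}" using piB[of "x+m+1"] piB[of "y+m+1"] x y by auto
        then have "\<pi> (x+m+1) = \<pi> (y+m+1)" using e x y by (auto simp: \<beta>_def)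
        then show "x = y" using inj_eq[OF piinj] by simp
      qed
      show "\<beta> ` {0..<m} \<subseteq> {0..<m}"
      proof
        fix y assume "y \<in> \<beta> ` {0..<m}"
        then obtain x where x: "x < m" "y = \<beta> x" by auto
        have "\<pi> (x+m+1) \<in> {m+1..2*m}" using piB[of "x+m+1"] x by auto
        then show "y \<in> {0..<m}" using x by (auto simp: \<beta>_def)
      qed
    qed (auto simp: \<beta>_def)
    have combpi: "comb m \<alpha> \<beta> = \<pi>"
    proof
      fix i
      consider "i \<in> {1..m}" | "i \<in> {m+1..2*m}" | "i \<notin> {1..2*m}" by fastforce
      then show "comb m \<alpha> \<beta> i = \<pi> i"
      proof cases
        case 1
        then have "\<pi> i \<in> {1..m}" by (rule piA)
        then show ?thesis using 1 by (auto simp: comb_def \<alpha>_def)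
      next
        case 2
        then have "\<pi> i \<in> {m+1..2*m}" by (rule piB)
        then show ?thesis using 2 by (auto simp: comb_def \<beta>_def)
      next
        case 3
        then show ?thesis using piO[OF 3] by (auto simp: comb_def)
      qed
    qed
    have "flip m S \<circ> (\<rho> \<circ> comb m \<alpha> \<beta>) = id"
      unfolding combpi \<pi>_def by (simp add: fun_eq_iff r\<nu> flip_flip)
    then have "u (P0 m) = u (pt m (\<rho> \<circ> comb m \<alpha> \<beta>))"
      using pt_flip[of m S "\<rho> \<circ> comb m \<alpha> \<beta>"] pt_id by simp
    also have "\<dots> = signof \<alpha> * signof \<beta> * u (pt m \<rho>)" by (rule F1[OF \<alpha>P \<beta>P])
    finally have "signof \<alpha> * signof \<beta> * u (pt m \<rho>) = 0" using z by simp
    moreover have "signof \<alpha> * signof \<beta> \<noteq> (0::rat)" by (simp add: sign_def)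
    ultimately show ?thesis by simp
  qed
qed



definition Kop :: "nat \<Rightarrow> ((nat \<Rightarrow> nat \<Rightarrow> rat) \<Rightarrow> rat) \<Rightarrow> (nat \<Rightarrow> nat \<Rightarrow> rat) \<Rightarrow> rat" where
  "Kop m w = (\<lambda>g. \<Sum>\<alpha>\<in>Pm m. \<Sum>\<beta>\<in>Pm m. signof \<alpha> * signof \<beta> * act_g (comb m \<alpha> \<beta>) w g)"

definition ip :: "nat \<Rightarrow> ((nat \<Rightarrow> nat \<Rightarrow> rat) \<Rightarrow> rat) \<Rightarrow> ((nat \<Rightarrow> nat \<Rightarrow> rat) \<Rightarrow> rat) \<Rightarrow> rat" where
  "ip m u v = (\<Sum>\<rho>\<in>Sn (2*m). u (pt m \<rho>) * v (pt m \<rho>))"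

definition anti :: "nat \<Rightarrow> ((nat \<Rightarrow> nat \<Rightarrow> rat) \<Rightarrow> rat) \<Rightarrow> bool" where
  "anti m u \<longleftrightarrow> (\<forall>\<alpha>\<in>Pm m. \<forall>\<beta>\<in>Pm m. act_g (comb m \<alpha> \<beta>) u = (\<lambda>g. signof \<alpha> * signof \<beta> * u g))"

lemma signof_sq: "signof p * signof p = (1::rat)"
  by (simp add: sign_def)

lemma Sn_comp: "\<sigma> \<in> Sn n \<Longrightarrow> \<tau> \<in> Sn n \<Longrightarrow> \<sigma> \<circ> \<tau> \<in> Sn n"
  by (simp add: Sn_def permutes_compose)

lemma id_Sn: "id \<in> Sn n" by (simp add: Sn_def permutes_id)

lemma Vg_sub: "qsubspace (Vg m)"
  unfolding Vg_def by (rule qspan_sub)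

lemma gmono_Vg: "\<sigma> \<in> Sn (2*m) \<Longrightarrow> gmono m \<sigma> \<in> Vg m"
  unfolding Vg_def by (rule qspan_base) auto

lemma Vg_inv:
  assumes \<sigma>: "\<sigma> \<in> Sn (2*m)" and v: "v \<in> Vg m"
  shows "act_g \<sigma> v \<in> Vg m"
proof -
  obtain S c where S: "finite S" "S \<subseteq> gmono m ` Sn (2*m)" and vv: "v = (\<lambda>x. \<Sum>b\<in>S. c b * b x)"
    using v unfolding Vg_def qspan_def by blast
  have "act_g \<sigma> v = (\<lambda>g. \<Sum>b\<in>S. c b * act_g \<sigma> b g)"
    unfolding vv by (simp add: act_g_def)
  also have "\<dots> \<in> Vg m"
  proof (rule qsub_sum[OF Vg_sub S(1)], intro ballI)
    fix b assume "b \<in> S"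
    then obtain \<tau> where \<tau>: "\<tau> \<in> Sn (2*m)" "b = gmono m \<tau>" using S by blast
    show "act_g \<sigma> b \<in> Vg m" using \<tau> \<sigma> by (simp add: act_gmono gmono_Vg Sn_comp)
  qed
  finally show ?thesis .
qed

lemma Kop_alt: "Kop m w = (\<lambda>g. \<Sum>\<alpha>\<in>Pm m. signof \<alpha> * (\<Sum>\<beta>\<in>Pm m. signof \<beta> * act_g (comb m \<alpha> \<beta>) w g))"
  unfolding Kop_def by (simp add: sum_distrib_left mult.assoc)

lemma Kop_in:
  assumes W: "qsubspace W" and w: "w \<in> W" and inv: "\<forall>\<sigma>\<in>Sn (2*m). \<forall>w\<in>W. act_g \<sigma> w \<in> W"
  shows "Kop m w \<in> W"
  unfolding Kop_alt
proof (rule qsub_sum[OF W finite_Pm], intro ballI)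
  fix \<alpha> assume \<alpha>: "\<alpha> \<in> Pm m"
  show "(\<lambda>x. \<Sum>\<beta>\<in>Pm m. signof \<beta> * act_g (comb m \<alpha> \<beta>) w x) \<in> W"
  proof (rule qsub_sum[OF W finite_Pm], intro ballI)
    fix \<beta> assume \<beta>: "\<beta> \<in> Pm m"
    show "act_g (comb m \<alpha> \<beta>) w \<in> W" using inv w comb_Sn[OF \<alpha> \<beta>] by blast
  qed
qed

lemma Pm_perm: "\<alpha> \<in> Pm m \<Longrightarrow> \<alpha> permutes {0..<m}" by (simp add: Pm_def)

lemma Kop_anti: "anti m (Kop m w)"
  unfolding anti_def
proof (intro ballI)
  fix \<alpha>0 \<beta>0 assume a0: "\<alpha>0 \<in> Pm m" and b0: "\<beta>0 \<in> Pm m"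
  show "act_g (comb m \<alpha>0 \<beta>0) (Kop m w) = (\<lambda>g. signof \<alpha>0 * signof \<beta>0 * Kop m w g)"
  proof
    fix g
    have c: "act_g (comb m \<alpha>0 \<beta>0) (act_g (comb m \<alpha> \<beta>) w) = act_g (comb m (\<alpha>0 \<circ> \<alpha>) (\<beta>0 \<circ> \<beta>)) w"
      if "\<alpha> \<in> Pm m" "\<beta> \<in> Pm m" for \<alpha> \<beta>
      using that by (simp add: act_g_comp comb_comp Pm_im)
    have "act_g (comb m \<alpha>0 \<beta>0) (Kop m w) g =
        (\<Sum>\<alpha>\<in>Pm m. \<Sum>\<beta>\<in>Pm m. signof \<alpha> * signof \<beta> * act_g (comb m (\<alpha>0 \<circ> \<alpha>) (\<beta>0 \<circ> \<beta>)) w g)"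
    proof -
      have "act_g (comb m \<alpha>0 \<beta>0) (Kop m w) g =
        (\<Sum>\<alpha>\<in>Pm m. \<Sum>\<beta>\<in>Pm m. signof \<alpha> * signof \<beta> * act_g (comb m \<alpha>0 \<beta>0) (act_g (comb m \<alpha> \<beta>) w) g)"
        unfolding Kop_def by (simp only: act_g_def)
      also have "\<dots> = (\<Sum>\<alpha>\<in>Pm m. \<Sum>\<beta>\<in>Pm m. signof \<alpha> * signof \<beta> * act_g (comb m (\<alpha>0 \<circ> \<alpha>) (\<beta>0 \<circ> \<beta>)) w g)"
        by (intro sum.cong refl) (simp add: c)
      finally show ?thesis .
    qed
    also have "\<dots> = (\<Sum>\<alpha>\<in>Pm m. \<Sum>\<beta>\<in>Pm m. signof \<alpha>0 * signof \<beta>0 *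
          (signof (\<alpha>0 \<circ> \<alpha>) * signof (\<beta>0 \<circ> \<beta>) * act_g (comb m (\<alpha>0 \<circ> \<alpha>) (\<beta>0 \<circ> \<beta>)) w g))"
    proof (intro sum.cong refl)
      fix \<alpha> \<beta> assume "\<alpha> \<in> Pm m" "\<beta> \<in> Pm m"
      then have "signof (\<alpha>0 \<circ> \<alpha>) = signof \<alpha>0 * (signof \<alpha> :: rat)" "signof (\<beta>0 \<circ> \<beta>) = signof \<beta>0 * (signof \<beta> :: rat)"
        using a0 b0 by (auto simp: Pm_def signof_compose)
      then show "signof \<alpha> * signof \<beta> * act_g (comb m (\<alpha>0 \<circ> \<alpha>) (\<beta>0 \<circ> \<beta>)) w g =
         signof \<alpha>0 * signof \<beta>0 * (signof (\<alpha>0 \<circ> \<alpha>) * signof (\<beta>0 \<circ> \<beta>) * act_g (comb m (\<alpha>0 \<circ> \<alpha>) (\<beta>0 \<circ> \<beta>)) w g)"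
        using signof_sq[of \<alpha>0] signof_sq[of \<beta>0]
        by (simp add: algebra_simps)
    qed
    also have "\<dots> = signof \<alpha>0 * signof \<beta>0 * (\<Sum>\<alpha>\<in>Pm m. \<Sum>\<beta>\<in>Pm m.
          (signof (\<alpha>0 \<circ> \<alpha>) * signof (\<beta>0 \<circ> \<beta>) * act_g (comb m (\<alpha>0 \<circ> \<alpha>) (\<beta>0 \<circ> \<beta>)) w g))"
      by (simp add: sum_distrib_left)
    also have "(\<Sum>\<alpha>\<in>Pm m. \<Sum>\<beta>\<in>Pm m.
          (signof (\<alpha>0 \<circ> \<alpha>) * signof (\<beta>0 \<circ> \<beta>) * act_g (comb m (\<alpha>0 \<circ> \<alpha>) (\<beta>0 \<circ> \<beta>)) w g)) = Kop m w g"
    proof -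
      have "(\<Sum>\<alpha>\<in>Pm m. \<Sum>\<beta>\<in>Pm m.
          (signof (\<alpha>0 \<circ> \<alpha>) * signof (\<beta>0 \<circ> \<beta>) * act_g (comb m (\<alpha>0 \<circ> \<alpha>) (\<beta>0 \<circ> \<beta>)) w g))
        = (\<Sum>\<alpha>\<in>Pm m. \<Sum>\<beta>\<in>Pm m. (signof (\<alpha>0 \<circ> \<alpha>) * signof \<beta> * act_g (comb m (\<alpha>0 \<circ> \<alpha>) \<beta>) w g))"
      proof (rule sum.cong[OF refl])
        fix \<alpha>
        show "(\<Sum>\<beta>\<in>Pm m. (signof (\<alpha>0 \<circ> \<alpha>) * signof (\<beta>0 \<circ> \<beta>) * act_g (comb m (\<alpha>0 \<circ> \<alpha>) (\<beta>0 \<circ> \<beta>)) w g))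
          = (\<Sum>\<beta>\<in>Pm m. (signof (\<alpha>0 \<circ> \<alpha>) * signof \<beta> * act_g (comb m (\<alpha>0 \<circ> \<alpha>) \<beta>) w g))"
          unfolding Pm_def
          by (rule setum_permutations_compose_left[symmetric, where f="\<lambda>\<beta>. signof (\<alpha>0 \<circ> \<alpha>) * signof \<beta> * act_g (comb m (\<alpha>0 \<circ> \<alpha>) \<beta>) w g"])
             (use b0 in \<open>simp add: Pm_def\<close>)
      qed
      also have "\<dots> = (\<Sum>\<alpha>\<in>Pm m. \<Sum>\<beta>\<in>Pm m. (signof \<alpha> * signof \<beta> * act_g (comb m \<alpha> \<beta>) w g))"
        unfolding Pm_def
        by (rule setum_permutations_compose_left[symmetric, where f="\<lambda>\<alpha>. \<Sum>\<beta>\<in>{p. p permutes {0..<m}}. (signof \<alpha> * signof \<beta> * act_g (comb m \<alpha> \<beta>) w g)"]) (use a0 in \<open>simp add: Pm_def\<close>)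
      finally show ?thesis unfolding Kop_def .
    qed
    finally show "act_g (comb m \<alpha>0 \<beta>0) (Kop m w) g = signof \<alpha>0 * signof \<beta>0 * Kop m w g" .
  qed
qed



lemma anti_app:
  assumes u: "anti m u" and a: "\<alpha> \<in> Pm m" and b: "\<beta> \<in> Pm m"
  shows "act_g (comb m \<alpha> \<beta>) u g = signof \<alpha> * signof \<beta> * u g"
proof -
  have "act_g (comb m \<alpha> \<beta>) u = (\<lambda>g. signof \<alpha> * signof \<beta> * u g)"
    using u a b unfolding anti_def by blast
  then show ?thesis by simp
qed

lemma gid_anti: "anti m (gmono m id)"
  unfolding anti_def by (simp add: act_gmono gmono_comb)

lemma finite_Sn: "finite (Sn n)"
  unfolding Sn_def by (simp add: finite_permutations)

lemma card_Pm_pos: "card (Pm m) > 0"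
proof -
  have "id \<in> Pm m" by (simp add: Pm_def)
  then show ?thesis using finite_Pm card_gt_0_iff by blast
qed

lemma anti_Kop_self:
  assumes u: "anti m u"
  shows "Kop m u = (\<lambda>g. of_nat (card (Pm m) * card (Pm m)) * u g)"
proof
  fix g
  have "Kop m u g = (\<Sum>\<alpha>\<in>Pm m. \<Sum>\<beta>\<in>Pm m. u g)"
  proof (unfold Kop_def, intro sum.cong refl)
    fix \<alpha> \<beta> assume "\<alpha> \<in> Pm m" "\<beta> \<in> Pm m"
    then have "act_g (comb m \<alpha> \<beta>) u g = signof \<alpha> * signof \<beta> * u g"
      by (rule anti_app[OF u])
    then show "signof \<alpha> * signof \<beta> * act_g (comb m \<alpha> \<beta>) u g = u g"
      using signof_sq[of \<alpha>] signof_sq[of \<beta>] by (simp add: algebra_simps)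
  qed
  then show "Kop m u g = of_nat (card (Pm m) * card (Pm m)) * u g" by simp
qed

lemma gid_P0: "gmono m id (P0 m) = 1"
proof -
  have sP: "symm (P0 m) = P0 m" by (rule symm_of_sym) (rule P0_sym)
  have e: "P0 m (Suc i) (Suc (j+m)) = (if i = j then 1 else 0)" if "i < m" "j < m" for i j
  proof -
    have "{i+1, j+m+1} \<in> match m id \<longleftrightarrow> i = j"
    proof
      assume "{i+1, j+m+1} \<in> match m id"
      then obtain p where p: "p \<in> {1..m}" "{i+1, j+m+1} = {p, m+p}" unfolding match_def by auto
      then show "i = j" using that by (auto simp: doubleton_eq_iff)
    next
      assume "i = j"
      then show "{i+1, j+m+1} \<in> match m id" unfolding match_def using that
        by (intro image_eqI[of _ _ "i+1"]) auto
    qed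
    then show ?thesis unfolding P0_def by (simp add: add.commute)
  qed
  have "mat m m (\<lambda>(p,q). symm (P0 m) (p+1) (q+m+1)) = 1\<^sub>m m"
    by (rule eq_matI) (auto simp: sP e)
  then show ?thesis unfolding gmono_id_det by simp
qed

lemma anti_Vg:
  assumes v: "v \<in> Vg m" and av: "anti m v"
  shows "v = (\<lambda>g. v (P0 m) * gmono m id g)"
proof -
  define u where "u = (\<lambda>g. v g - v (P0 m) * gmono m id g)"
  have uV: "u \<in> Vg m" unfolding u_def
    by (rule qsub_diff[OF Vg_sub v qsub_smult[OF Vg_sub gmono_Vg[OF id_Sn]]])
  have ua: "\<forall>\<alpha>\<in>Pm m. \<forall>\<beta>\<in>Pm m. act_g (comb m \<alpha> \<beta>) u = (\<lambda>g. signof \<alpha> * signof \<beta> * u g)"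
  proof (intro ballI ext)
    fix \<alpha> \<beta> g assume a: "\<alpha> \<in> Pm m" and b: "\<beta> \<in> Pm m"
    have 1: "act_g (comb m \<alpha> \<beta>) v g = signof \<alpha> * signof \<beta> * v g"
      by (rule anti_app[OF av a b])
    have 2: "act_g (comb m \<alpha> \<beta>) (gmono m id) g = signof \<alpha> * signof \<beta> * gmono m id g"
      by (rule anti_app[OF gid_anti a b])
    have "act_g (comb m \<alpha> \<beta>) u g = act_g (comb m \<alpha> \<beta>) v g - v (P0 m) * act_g (comb m \<alpha> \<beta>) (gmono m id) g"
      unfolding u_def by (simp add: act_g_def)
    then show "act_g (comb m \<alpha> \<beta>) u g = signof \<alpha> * signof \<beta> * u g"
      unfolding 1 2 u_def by (simp add: algebra_simps)
  qed
  have u0: "u (P0 m) = 0" unfolding u_def by (simp add: gid_P0)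
  have z: "\<forall>\<rho>\<in>Sn (2*m). u (pt m \<rho>) = 0" using anti_zero[OF ua u0] by blast
  have uz: "u = (\<lambda>g. 0)" by (rule E_lemma[OF subsetD[OF Vg_in_mon uV] z])
  have h: "v g = v (P0 m) * gmono m id g" for g
    using fun_cong[OF uz, of g] unfolding u_def by simp
  show ?thesis by (rule ext) (rule h)
qed

lemma ip_sym: "ip m u v = ip m v u"
  unfolding ip_def by (simp add: mult.commute)

lemma ip_sum: "finite I \<Longrightarrow> ip m u (\<lambda>g. \<Sum>i\<in>I. F i g) = (\<Sum>i\<in>I. ip m u (F i))"
  unfolding ip_def by (simp add: sum_distrib_left sum.swap[of _ I])

lemma ip_smult: "ip m u (\<lambda>g. c * f g) = c * ip m u f"
  unfolding ip_def by (simp add: sum_distrib_left algebra_simps)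

lemma ip_zero: "ip m u (\<lambda>g. 0) = 0"
  unfolding ip_def by simp

lemma ip_shift:
  assumes \<sigma>: "\<sigma> \<in> Sn (2*m)"
  shows "ip m w (act_g \<sigma> f) = ip m (act_g (Hilbert_Choice.inv \<sigma>) w) f"
proof -
  have sp: "\<sigma> permutes {1..2*m}" "Hilbert_Choice.inv \<sigma> permutes {1..2*m}"
    using \<sigma> by (auto simp: Sn_def permutes_inv)
  have "ip m w (act_g \<sigma> f) = (\<Sum>\<rho>\<in>{p. p permutes {1..2*m}}. w (pt m \<rho>) * f (pt m (\<rho> \<circ> \<sigma>)))"
    unfolding ip_def Sn_def by (simp add: act_pt)
  also have "\<dots> = (\<Sum>\<rho>\<in>{p. p permutes {1..2*m}}. w (pt m (\<rho> \<circ> Hilbert_Choice.inv \<sigma>)) * f (pt m (\<rho> \<circ> Hilbert_Choice.inv \<sigma> \<circ> \<sigma>)))"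
    by (rule sum_permutations_compose_right[OF sp(2)])
  also have "\<dots> = (\<Sum>\<rho>\<in>{p. p permutes {1..2*m}}. act_g (Hilbert_Choice.inv \<sigma>) w (pt m \<rho>) * f (pt m \<rho>))"
    using permutes_inv_o(2)[OF sp(1)] by (simp add: act_pt comp_assoc)
  finally show ?thesis unfolding ip_def Sn_def .
qed

lemma Kop_inv:
  "Kop m w = (\<lambda>g. \<Sum>\<alpha>\<in>Pm m. \<Sum>\<beta>\<in>Pm m. signof \<alpha> * signof \<beta> * act_g (Hilbert_Choice.inv (comb m \<alpha> \<beta>)) w g)"
proof
  fix g
  have "Kop m w g = (\<Sum>\<alpha>\<in>Pm m. \<Sum>\<beta>\<in>Pm m. signof (Hilbert_Choice.inv \<alpha>) * signof (Hilbert_Choice.inv \<beta>) *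
      act_g (comb m (Hilbert_Choice.inv \<alpha>) (Hilbert_Choice.inv \<beta>)) w g)"
  proof -
    have "Kop m w g = (\<Sum>\<alpha>\<in>Pm m. \<Sum>\<beta>\<in>Pm m. signof \<alpha> * signof (Hilbert_Choice.inv \<beta>) *
      act_g (comb m \<alpha> (Hilbert_Choice.inv \<beta>)) w g)"
      unfolding Kop_def
    proof (rule sum.cong[OF refl])
      fix \<alpha>
      show "(\<Sum>\<beta>\<in>Pm m. signof \<alpha> * signof \<beta> * act_g (comb m \<alpha> \<beta>) w g) =
        (\<Sum>\<beta>\<in>Pm m. signof \<alpha> * signof (Hilbert_Choice.inv \<beta>) * act_g (comb m \<alpha> (Hilbert_Choice.inv \<beta>)) w g)"
        unfolding Pm_def by (rule sum_permutations_inverse)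
    qed
    also have "\<dots> = (\<Sum>\<alpha>\<in>Pm m. \<Sum>\<beta>\<in>Pm m. signof (Hilbert_Choice.inv \<alpha>) * signof (Hilbert_Choice.inv \<beta>) *
      act_g (comb m (Hilbert_Choice.inv \<alpha>) (Hilbert_Choice.inv \<beta>)) w g)"
      unfolding Pm_def by (rule sum_permutations_inverse)
    finally show ?thesis .
  qed
  also have "\<dots> = (\<Sum>\<alpha>\<in>Pm m. \<Sum>\<beta>\<in>Pm m. signof \<alpha> * signof \<beta> * act_g (Hilbert_Choice.inv (comb m \<alpha> \<beta>)) w g)"
  proof (intro sum.cong refl)
    fix \<alpha> \<beta> assume a: "\<alpha> \<in> Pm m" and b: "\<beta> \<in> Pm m"
    have "signof (Hilbert_Choice.inv \<alpha>) = (signof \<alpha> :: rat)" "signof (Hilbert_Choice.inv \<beta>) = (signof \<beta> :: rat)"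
    proof -
      have "permutation \<alpha>" "permutation \<beta>"
        using permutes_imp_permutation[of "{0..<m}" \<alpha>] permutes_imp_permutation[of "{0..<m}" \<beta>] a b
        by (simp_all add: Pm_def)
      then show "signof (Hilbert_Choice.inv \<alpha>) = (signof \<alpha> :: rat)" "signof (Hilbert_Choice.inv \<beta>) = (signof \<beta> :: rat)"
        by (simp_all add: sign_inverse)
    qed
    then show "signof (Hilbert_Choice.inv \<alpha>) * signof (Hilbert_Choice.inv \<beta>) *
      act_g (comb m (Hilbert_Choice.inv \<alpha>) (Hilbert_Choice.inv \<beta>)) w g =
      signof \<alpha> * signof \<beta> * act_g (Hilbert_Choice.inv (comb m \<alpha> \<beta>)) w g"
      using a b by (simp add: comb_inv)
  qed
  finally show "Kop m w g = (\<Sum>\<alpha>\<in>Pm m. \<Sum>\<beta>\<in>Pm m. signof \<alpha> * signof \<beta> * act_g (Hilbert_Choice.inv (comb m \<alpha> \<beta>)) w g)" .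
qed

lemma Kop_ip:
  "ip m w' (Kop m v) = ip m v (Kop m w')"
proof -
  have "ip m w' (Kop m v) = (\<Sum>\<alpha>\<in>Pm m. \<Sum>\<beta>\<in>Pm m. signof \<alpha> * signof \<beta> * ip m w' (act_g (comb m \<alpha> \<beta>) v))"
    unfolding Kop_def by (simp add: ip_sum finite_Pm ip_smult)
  also have "\<dots> = (\<Sum>\<alpha>\<in>Pm m. \<Sum>\<beta>\<in>Pm m. signof \<alpha> * signof \<beta> * ip m v (act_g (Hilbert_Choice.inv (comb m \<alpha> \<beta>)) w'))"
    by (intro sum.cong refl) (simp add: ip_shift comb_Sn ip_sym)
  also have "\<dots> = ip m v (Kop m w')"
  proof -
    have "ip m v (Kop m w') = (\<Sum>\<alpha>\<in>Pm m. \<Sum>\<beta>\<in>Pm m. signof \<alpha> * signof \<beta> * ip m v (act_g (Hilbert_Choice.inv (comb m \<alpha> \<beta>)) w'))"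
      by (subst Kop_inv) (simp add: ip_sum finite_Pm ip_smult)
    then show ?thesis by simp
  qed
  finally show ?thesis .
qed



lemma det_row_scale:
  fixes M :: "'a::comm_ring_1 mat"
  assumes M: "M \<in> carrier_mat n n"
  shows "det (mat n n (\<lambda>(i,j). c i * M $$ (i,j))) = (\<Prod>i<n. c i) * det M"
proof -
  have "det (mat n n (\<lambda>(i,j). c i * M $$ (i,j))) =
    (\<Sum>p\<in>{p. p permutes {0..<n}}. signof p * (\<Prod>i=0..<n. c i * M $$ (i, p i)))"
    by (subst det_def'[of _ n]) (auto intro!: sum.cong prod.cong simp: permutes_in_image)
  also have "\<dots> = (\<Sum>p\<in>{p. p permutes {0..<n}}. (\<Prod>i<n. c i) * (signof p * (\<Prod>i=0..<n. M $$ (i, p i))))"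
    by (intro sum.cong refl) (simp add: prod.distrib atLeast0LessThan algebra_simps)
  also have "\<dots> = (\<Prod>i<n. c i) * det M"
    by (simp add: det_def'[OF M] sum_distrib_left)
  finally show ?thesis .
qed

lemma vandermonde:
  fixes x :: "nat \<Rightarrow> 'a::idom"
  shows "det (mat n n (\<lambda>(i,j). x i ^ j)) = (\<Prod>j<n. \<Prod>i<j. (x j - x i))"
proof (induction n arbitrary: x)
  case 0
  then show ?case by (simp add: det_def)
next
  case (Suc n)
  define V where "V = mat (Suc n) (Suc n) (\<lambda>(i,j). x i ^ j)"
  define U :: "'a mat" where "U = mat (Suc n) (Suc n) (\<lambda>(i,j). if i = j then 1 else if i+1 = j then - x 0 else 0)"
  define A4 where "A4 = mat n n (\<lambda>(i,j). (x (i+1) - x 0) * x (i+1) ^ j)"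
  have V: "V \<in> carrier_mat (Suc n) (Suc n)" and U: "U \<in> carrier_mat (Suc n) (Suc n)"
    unfolding V_def U_def by auto
  have detU: "det U = 1"
  proof -
    have "upper_triangular U" unfolding upper_triangular_def U_def by auto
    then have "det U = prod_list (diag_mat U)" using det_upper_triangular U by blast
    also have "diag_mat U = map (\<lambda>i. 1) [0..<Suc n]" unfolding diag_mat_def U_def
      by (auto simp del: upt_Suc intro!: map_cong)
    finally show ?thesis by (simp del: upt_Suc add: map_replicate_const)
  qed
  have entry: "(V * U) $$ (i,j) = (if j = 0 then 1 else x i ^ j - x 0 * x i ^ (j - 1))"
    if i: "i < Suc n" and j: "j < Suc n" for i j
  proof -
    have "(V * U) $$ (i,j) = (\<Sum>k\<in>{0..<Suc n}. x i ^ k * U $$ (k, j))"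
      using i j V U by (simp add: scalar_prod_def V_def)
    also have "\<dots> = (\<Sum>k\<in>{0..<Suc n}. (if k = j then x i ^ k else 0) + (if k + 1 = j then - x 0 * x i ^ k else 0))"
      by (intro sum.cong refl) (use j in \<open>auto simp: U_def\<close>)
    also have "\<dots> = (\<Sum>k\<in>{0..<Suc n}. if k = j then x i ^ k else 0) + (\<Sum>k\<in>{0..<Suc n}. if k + 1 = j then - x 0 * x i ^ k else 0)"
      by (rule sum.distrib)
    also have "(\<Sum>k\<in>{0..<Suc n}. if k = j then x i ^ k else 0) = x i ^ j"
      using j by (simp add: sum.delta)
    also have "(\<Sum>k\<in>{0..<Suc n}. if k + 1 = j then - x 0 * x i ^ k else 0) = (if j = 0 then 0 else - x 0 * x i ^ (j - 1))"
    proof (cases j)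
      case 0 then show ?thesis by simp
    next
      case (Suc j0)
      then have "(\<Sum>k\<in>{0..<Suc n}. if k + 1 = j then - x 0 * x i ^ k else 0) = (\<Sum>k\<in>{0..<Suc n}. if k = j0 then - x 0 * x i ^ k else 0)"
        by (intro sum.cong refl) auto
      also have "\<dots> = - x 0 * x i ^ j0" using j Suc by (simp add: sum.delta)
      finally show ?thesis using Suc by simp
    qed
    also have "x i ^ j + (if j = 0 then 0 else - x 0 * x i ^ (j - 1)) = (if j = 0 then 1 else x i ^ j - x 0 * x i ^ (j - 1))"
      by simp
    finally show ?thesis .
  qed
  have block: "V * U = four_block_mat (1\<^sub>m 1) (0\<^sub>m 1 n) (mat n 1 (\<lambda>_. 1)) A4"
  proof (rule eq_matI)
    fix i j assume i: "i < dim_row (four_block_mat (1\<^sub>m 1) (0\<^sub>m 1 n) (mat n 1 (\<lambda>_. 1)) A4)"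
      and j: "j < dim_col (four_block_mat (1\<^sub>m 1) (0\<^sub>m 1 n) (mat n 1 (\<lambda>_. 1)) A4)"
    then have i': "i < Suc n" and j': "j < Suc n" by (auto simp: A4_def)
    show "(V * U) $$ (i, j) = four_block_mat (1\<^sub>m 1) (0\<^sub>m 1 n) (mat n 1 (\<lambda>_. 1)) A4 $$ (i, j)"
      unfolding entry[OF i' j']
    proof (cases "j = 0")
      case True then show "(if j = 0 then 1 else x i ^ j - x 0 * x i ^ (j - 1)) =
        four_block_mat (1\<^sub>m 1) (0\<^sub>m 1 n) (mat n 1 (\<lambda>_. 1)) A4 $$ (i, j)"
        using i' by (auto simp: four_block_mat_def A4_def)
    next
      case False
      then obtain j0 where j0: "j = Suc j0" by (cases j) auto
      show "(if j = 0 then 1 else x i ^ j - x 0 * x i ^ (j - 1)) =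
        four_block_mat (1\<^sub>m 1) (0\<^sub>m 1 n) (mat n 1 (\<lambda>_. 1)) A4 $$ (i, j)"
      proof (cases "i = 0")
        case True then show ?thesis using j' j0 by (simp add: four_block_mat_def A4_def)
      next
        case False
        then obtain i0 where i0: "i = Suc i0" by (cases i) auto
        show ?thesis using i' j' i0 j0 by (simp add: four_block_mat_def A4_def algebra_simps)
      qed
    qed
  qed (auto simp: V_def U_def A4_def)
  have "det V = det (V * U)" using det_mult[OF V U] detU by simp
  also have "\<dots> = det (1\<^sub>m 1 :: 'a mat) * det A4"
    unfolding block by (rule det_four_block_mat_upper_right_zero) (auto simp: A4_def)
  also have "\<dots> = det A4" by simp
  also have "det A4 = (\<Prod>i<n. x (i+1) - x 0) * det (mat n n (\<lambda>(i,j). x (Suc i) ^ j))"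
  proof -
    have "A4 = mat n n (\<lambda>(i,j). (x (i+1) - x 0) * mat n n (\<lambda>(i,j). x (Suc i) ^ j) $$ (i,j))"
      unfolding A4_def by (rule cong_mat) auto
    then show ?thesis by (simp add: det_row_scale)
  qed
  also have "det (mat n n (\<lambda>(i,j). x (Suc i) ^ j)) = (\<Prod>j<n. \<Prod>i<j. (x (Suc j) - x (Suc i)))"
    using Suc.IH[of "\<lambda>i. x (Suc i)"] by simp
  also have "(\<Prod>i<n. x (i+1) - x 0) * (\<Prod>j<n. \<Prod>i<j. (x (Suc j) - x (Suc i))) = (\<Prod>j<Suc n. \<Prod>i<j. (x j - x i))"
  proof -
    have "(\<Prod>j<Suc n. \<Prod>i<j. (x j - x i)) = (\<Prod>j<n. \<Prod>i<Suc j. (x (Suc j) - x i))"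
      by (subst prod.lessThan_Suc_shift) simp
    also have "\<dots> = (\<Prod>j<n. (x (Suc j) - x 0) * (\<Prod>i<j. (x (Suc j) - x (Suc i))))"
      by (intro prod.cong refl) (rule prod.lessThan_Suc_shift)
    also have "\<dots> = (\<Prod>i<n. x (i+1) - x 0) * (\<Prod>j<n. \<Prod>i<j. (x (Suc j) - x (Suc i)))"
      by (simp only: prod.distrib Suc_eq_plus1)
    finally show ?thesis by simp
  qed
  finally show ?case unfolding V_def .
qed



lemma irred:
  assumes WV: "W \<subseteq> Vg m" and W: "qsubspace W" and inv: "\<forall>\<sigma>\<in>Sn (2*m). \<forall>w\<in>W. act_g \<sigma> w \<in> W"
  shows "W = {\<lambda>g. 0} \<or> W = Vg m"
proof (cases "\<exists>w\<in>W. Kop m w \<noteq> (\<lambda>g. 0)")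
  case True
  then obtain w where w: "w \<in> W" and Kw: "Kop m w \<noteq> (\<lambda>g. 0)" by blast
  have KW: "Kop m w \<in> W" by (rule Kop_in[OF W w inv])
  have KV: "Kop m w \<in> Vg m" using KW WV by blast
  define c where "c = Kop m w (P0 m)"
  have Kc: "Kop m w = (\<lambda>g. c * gmono m id g)" unfolding c_def by (rule anti_Vg[OF KV Kop_anti])
  have c0: "c \<noteq> 0" using Kw Kc by auto
  have "(\<lambda>g. (1/c) * Kop m w g) \<in> W" by (rule qsub_smult[OF W KW])
  moreover have "(\<lambda>g. (1/c) * Kop m w g) = gmono m id" using c0 by (simp add: Kc fun_eq_iff)
  ultimately have gW: "gmono m id \<in> W" by simp
  have "gmono m ` Sn (2*m) \<subseteq> W"
  proof
    fix f assume "f \<in> gmono m ` Sn (2*m)"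
    then obtain \<sigma> where \<sigma>: "\<sigma> \<in> Sn (2*m)" "f = gmono m \<sigma>" by blast
    have "act_g \<sigma> (gmono m id) \<in> W" using inv \<sigma>(1) gW by blast
    then show "f \<in> W" using \<sigma>(2) by (simp add: act_gmono)
  qed
  then have "Vg m \<subseteq> W" unfolding Vg_def by (rule qspan_least[OF W])
  then show ?thesis using WV by blast
next
  case False
  then have K0: "\<And>w. w \<in> W \<Longrightarrow> Kop m w = (\<lambda>g. 0)" by blast
  define c :: rat where "c = of_nat (card (Pm m) * card (Pm m))"
  have c0: "c \<noteq> 0" unfolding c_def using card_Pm_pos by simp
  have Kg: "Kop m (gmono m id) = (\<lambda>g. c * gmono m id g)" unfolding c_def by (rule anti_Kop_self[OF gid_anti])
  have zero: "w = (\<lambda>g. 0)" if w: "w \<in> W" for w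
  proof -
    have ipg: "ip m w (gmono m \<sigma>) = 0" if \<sigma>: "\<sigma> \<in> Sn (2*m)" for \<sigma>
    proof -
      define w' where "w' = act_g (Hilbert_Choice.inv \<sigma>) w"
      have w': "w' \<in> W" unfolding w'_def using inv w Sn_inv[OF \<sigma>] by blast
      have "ip m w (gmono m \<sigma>) = ip m w (act_g \<sigma> (gmono m id))" by (simp add: act_gmono)
      also have "\<dots> = ip m w' (gmono m id)" unfolding w'_def by (rule ip_shift[OF \<sigma>])
      also have "gmono m id = (\<lambda>g. (1/c) * Kop m (gmono m id) g)" using c0 by (simp add: Kg)
      also have "ip m w' \<dots> = (1/c) * ip m w' (Kop m (gmono m id))" by (rule ip_smult)
      also have "ip m w' (Kop m (gmono m id)) = ip m (gmono m id) (Kop m w')" by (rule Kop_ip)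
      also have "\<dots> = 0" using K0[OF w'] by (simp add: ip_zero)
      finally show ?thesis by simp
    qed
    have wV: "w \<in> Vg m" using w WV by blast
    obtain S cc where S: "finite S" "S \<subseteq> gmono m ` Sn (2*m)" and ww: "w = (\<lambda>x. \<Sum>b\<in>S. cc b * b x)"
      using wV unfolding Vg_def qspan_def by blast
    have "ip m w w = ip m w (\<lambda>x. \<Sum>b\<in>S. cc b * b x)" using ww by simp
    also have "\<dots> = (\<Sum>b\<in>S. cc b * ip m w b)" using S(1) by (simp add: ip_sum ip_smult)
    also have "\<dots> = 0"
    proof (rule sum.neutral, intro ballI)
      fix b assume "b \<in> S"
      then obtain \<sigma> where "\<sigma> \<in> Sn (2*m)" "b = gmono m \<sigma>" using S by blast
      then show "cc b * ip m w b = 0" using ipg by simp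
    qed
    finally have "(\<Sum>\<rho>\<in>Sn (2*m). w (pt m \<rho>) * w (pt m \<rho>)) = 0" unfolding ip_def .
    then have "\<forall>\<rho>\<in>Sn (2*m). w (pt m \<rho>) * w (pt m \<rho>) = 0"
      using sum_nonneg_eq_0_iff[OF finite_Sn, where f="\<lambda>\<rho>. w (pt m \<rho>) * w (pt m \<rho>)"] by simp
    then have "\<forall>\<rho>\<in>Sn (2*m). w (pt m \<rho>) = 0" by simp
    then show ?thesis by (rule E_lemma[OF subsetD[OF Vg_in_mon wV]])
  qed
  have "W = {\<lambda>g. 0}" using zero qsub_zero[OF W] by blast
  then show ?thesis by blast
qed

definition Gx :: "nat \<Rightarrow> (nat \<Rightarrow> rat) \<Rightarrow> nat \<Rightarrow> nat \<Rightarrow> rat" where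
  "Gx m x i j = (\<Sum>k<m. x i ^ k * x j ^ k)"

definition Phi :: "nat \<Rightarrow> ((nat \<Rightarrow> nat \<Rightarrow> rat) \<Rightarrow> rat) \<Rightarrow> (nat \<Rightarrow> rat) \<Rightarrow> rat" where
  "Phi m v = (\<lambda>x. v (Gx m x))"

lemma symm_Gx: "symm (Gx m x) = Gx m x"
  by (rule symm_of_sym) (simp add: Gx_def mult.commute)

lemma Phi_act: "Phi m (act_g \<sigma> v) = act_x \<sigma> (Phi m v)"
proof
  fix x
  have "(\<lambda>i j. symm (Gx m x) (\<sigma> i) (\<sigma> j)) = Gx m (x \<circ> \<sigma>)"
    by (simp add: symm_Gx Gx_def fun_eq_iff)
  then show "Phi m (act_g \<sigma> v) x = act_x \<sigma> (Phi m v) x"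
    by (simp add: Phi_def act_g_def act_x_def)
qed

lemma prod_pairs: "(\<Prod>(p,q)\<in>{(p,q). p < q \<and> q < (m::nat)}. f p q) = (\<Prod>q<m. \<Prod>p<q. f p q)"
proof -
  have e: "{(p,q). p < q \<and> q < m} = (\<lambda>(q,p). (p,q)) ` (SIGMA q:{..<m}. {..<q})" by auto
  have i: "inj_on (\<lambda>(q,p). (p,q)) (SIGMA q:{..<m}. {..<q})" by (auto simp: inj_on_def)
  have "(\<Prod>(p,q)\<in>{(p,q). p < q \<and> q < m}. f p q) = (\<Prod>(q,p)\<in>(SIGMA q:{..<m}. {..<q}). f p q)"
    unfolding e by (subst prod.reindex[OF i]) (simp add: case_prod_unfold)
  also have "\<dots> = (\<Prod>q<m. \<Prod>p<q. f p q)"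
    using prod.Sigma[of "{..<m}" "\<lambda>q. {..<q}" "\<lambda>q p. f p q"] by (simp add: case_prod_unfold)
  finally show ?thesis .
qed

lemma Delta_blk1: "Delta (blk1 m \<sigma>) x = (\<Prod>q<m. \<Prod>p<q. x (\<sigma> (Suc p)) - x (\<sigma> (Suc q)))"
proof -
  have "Delta (blk1 m \<sigma>) x = (\<Prod>(p,q)\<in>{(p,q). p < q \<and> q < m}. x (\<sigma> (Suc p)) - x (\<sigma> (Suc q)))"
    unfolding Delta_def by (intro prod.cong) (auto simp: blk1_def simp del: upt_Suc)
  then show ?thesis by (simp add: prod_pairs)
qed

lemma Delta_blk2: "Delta (blk2 m \<sigma>) x = (\<Prod>q<m. \<Prod>p<q. x (\<sigma> (Suc (m+p))) - x (\<sigma> (Suc (m+q))))"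
proof -
  have "Delta (blk2 m \<sigma>) x = (\<Prod>(p,q)\<in>{(p,q). p < q \<and> q < m}. x (\<sigma> (Suc (m+p))) - x (\<sigma> (Suc (m+q))))"
    unfolding Delta_def by (intro prod.cong) (auto simp: blk2_def simp del: upt_Suc)
  then show ?thesis by (simp add: prod_pairs)
qed

lemma Phi_gmono: "Phi m (gmono m \<sigma>) = xmono m \<sigma>"
proof
  fix x
  define y :: "nat \<Rightarrow> rat" where "y = (\<lambda>p. x (\<sigma> (Suc p)))"
  define z :: "nat \<Rightarrow> rat" where "z = (\<lambda>p. x (\<sigma> (Suc (m+p))))"
  define Va where "Va = mat m m (\<lambda>(i,j). y i ^ j)"
  define Vb where "Vb = mat m m (\<lambda>(i,j). z i ^ j)"
  have Va: "Va \<in> carrier_mat m m" and Vb: "Vb \<in> carrier_mat m m" unfolding Va_def Vb_def by auto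
  have "Phi m (gmono m \<sigma>) x = det (mat m m (\<lambda>(p,q). Gx m x (\<sigma> (Suc p)) (\<sigma> (Suc (m+q)))))"
    unfolding Phi_def gmono_def gbr_def symm_Gx
    by (rule arg_cong[where f=det], rule cong_mat) (auto simp: blk1_def blk2_def simp del: upt_Suc)
  also have "mat m m (\<lambda>(p,q). Gx m x (\<sigma> (Suc p)) (\<sigma> (Suc (m+q)))) = Va * transpose_mat Vb"
    by (rule eq_matI) (auto simp: Va_def Vb_def Gx_def scalar_prod_def y_def z_def atLeast0LessThan)
  also have "det (Va * transpose_mat Vb) = det Va * det Vb"
    using det_mult[OF Va transpose_carrier_mat[THEN iffD2, OF Vb]] det_transpose[OF Vb] by simp
  also have "det Va * det Vb = (\<Prod>q<m. \<Prod>p<q. (y q - y p) * (z q - z p))"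
    unfolding Va_def Vb_def vandermonde by (simp add: prod.distrib)
  also have "\<dots> = (\<Prod>q<m. \<Prod>p<q. (y p - y q) * (z p - z q))"
    by (intro prod.cong refl) (simp add: algebra_simps)
  also have "\<dots> = xmono m \<sigma> x"
    unfolding xmono_def Delta_blk1 Delta_blk2 y_def z_def by (simp add: prod.distrib)
  finally show "Phi m (gmono m \<sigma>) x = xmono m \<sigma> x" .
qed



lemma xmono_id_nz: "xmono m id \<noteq> (\<lambda>x. 0)"
proof
  assume h: "xmono m id = (\<lambda>x. 0)"
  define x0 :: "nat \<Rightarrow> rat" where "x0 = of_nat"
  have d1: "Delta (blk1 m id) x0 \<noteq> 0"
    unfolding Delta_blk1 x0_def by (simp add: prod_zero_iff)
  have d2: "Delta (blk2 m id) x0 \<noteq> 0"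
    unfolding Delta_blk2 x0_def by (simp add: prod_zero_iff)
  have "xmono m id x0 = 0" using h by simp
  then show False using d1 d2 by (simp add: xmono_def)
qed

lemma Phi_lin: "qlinear_on V (Phi m)"
  unfolding qlinear_on_def Phi_def by simp

lemma Phi_image: "Phi m ` Vg m = Specht2 m"
proof
  show "Phi m ` Vg m \<subseteq> Specht2 m"
  proof
    fix f assume "f \<in> Phi m ` Vg m"
    then obtain v where v: "v \<in> Vg m" "f = Phi m v" by blast
    obtain S c where S: "finite S" "S \<subseteq> gmono m ` Sn (2*m)" and vv: "v = (\<lambda>x. \<Sum>b\<in>S. c b * b x)"
      using v(1) unfolding Vg_def qspan_def by blast
    have "f = (\<lambda>x. \<Sum>b\<in>S. c b * Phi m b x)" unfolding v(2) vv by (simp add: Phi_def)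
    also have "\<dots> \<in> Specht2 m" unfolding Specht2_def
    proof (rule qsub_sum[OF qspan_sub S(1)], intro ballI)
      fix b assume "b \<in> S"
      then obtain \<sigma> where "\<sigma> \<in> Sn (2*m)" "b = gmono m \<sigma>" using S by blast
      then show "Phi m b \<in> qspan (xmono m ` Sn (2*m))" by (auto simp: Phi_gmono intro!: qspan_base)
    qed
    finally show "f \<in> Specht2 m" .
  qed
next
  show "Specht2 m \<subseteq> Phi m ` Vg m"
  proof
    fix f assume "f \<in> Specht2 m"
    then obtain S c where S: "finite S" "S \<subseteq> xmono m ` Sn (2*m)" and ff: "f = (\<lambda>x. \<Sum>s\<in>S. c s * s x)"
      unfolding Specht2_def qspan_def by blast
    define pre where "pre = (\<lambda>s. inv_into (Sn (2*m)) (xmono m) s)"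
    have pre: "pre s \<in> Sn (2*m)" "xmono m (pre s) = s" if "s \<in> S" for s
    proof -
      have "s \<in> xmono m ` Sn (2*m)" using that S by blast
      then show "pre s \<in> Sn (2*m)" "xmono m (pre s) = s" unfolding pre_def
        by (rule inv_into_into, rule f_inv_into_f)
    qed
    define v where "v = (\<lambda>g. \<Sum>s\<in>S. c s * gmono m (pre s) g)"
    have vV: "v \<in> Vg m" unfolding v_def
      by (rule qsub_sum[OF Vg_sub S(1)]) (auto intro: gmono_Vg pre)
    have "Phi m v = (\<lambda>x. \<Sum>s\<in>S. c s * Phi m (gmono m (pre s)) x)" unfolding v_def by (simp add: Phi_def)
    also have "\<dots> = f" unfolding ff by (intro ext sum.cong refl) (simp add: Phi_gmono pre)
    finally show "f \<in> Phi m ` Vg m" using vV by blast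
  qed
qed

lemma Phi_inj: "inj_on (Phi m) (Vg m)"
proof -
  define K where "K = {v \<in> Vg m. Phi m v = (\<lambda>x. 0)}"
  have KV: "K \<subseteq> Vg m" unfolding K_def by blast
  have Ksub: "qsubspace K" unfolding qsubspace_def K_def
    using qsub_zero[OF Vg_sub] qsub_add[OF Vg_sub] qsub_smult[OF Vg_sub]
    by (auto simp: Phi_def fun_eq_iff)
  have Kinv: "\<forall>\<sigma>\<in>Sn (2*m). \<forall>w\<in>K. act_g \<sigma> w \<in> K"
  proof (intro ballI)
    fix \<sigma> w assume \<sigma>: "\<sigma> \<in> Sn (2*m)" and w: "w \<in> K"
    have "Phi m (act_g \<sigma> w) = act_x \<sigma> (Phi m w)" by (rule Phi_act)
    also have "\<dots> = (\<lambda>x. 0)" using w unfolding K_def by (simp add: act_x_def)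
    finally show "act_g \<sigma> w \<in> K" using Vg_inv[OF \<sigma>] w unfolding K_def by blast
  qed
  have "K \<noteq> Vg m"
  proof
    assume "K = Vg m"
    then have "gmono m id \<in> K" using gmono_Vg[OF id_Sn] by simp
    then have "xmono m id = (\<lambda>x. 0)" unfolding K_def by (simp add: Phi_gmono)
    then show False using xmono_id_nz by simp
  qed
  then have K0: "K = {\<lambda>g. 0}" using irred[OF KV Ksub Kinv] by blast
  show ?thesis
  proof (rule inj_onI)
    fix a b assume a: "a \<in> Vg m" and b: "b \<in> Vg m" and e: "Phi m a = Phi m b"
    have "(\<lambda>g. a g - b g) \<in> K" unfolding K_def using qsub_diff[OF Vg_sub a b] e
      by (simp add: Phi_def fun_eq_iff)
    then have "(\<lambda>g. a g - b g) = (\<lambda>g. 0)" using K0 by blast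
    then show "a = b" by (simp add: fun_eq_iff)
  qed
qed

theorem mainTheorem3:
  fixes m :: nat
  shows "(\<forall>\<sigma>\<in>Sn (2*m). \<forall>v\<in>Vg m. act_g \<sigma> v \<in> Vg m)
    \<and> Vg m \<noteq> {\<lambda>g. 0}
    \<and> (\<forall>W. W \<subseteq> Vg m \<and> qsubspace W \<and> (\<forall>\<sigma>\<in>Sn (2*m). \<forall>w\<in>W. act_g \<sigma> w \<in> W)
           \<longrightarrow> W = {\<lambda>g. 0} \<or> W = Vg m)
    \<and> (\<exists>\<Phi>. qlinear_on (Vg m) \<Phi> \<and> inj_on \<Phi> (Vg m) \<and> \<Phi> ` Vg m = Specht2 m
           \<and> (\<forall>\<sigma>\<in>Sn (2*m). \<Phi> (gmono m \<sigma>) = xmono m \<sigma>)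
           \<and> (\<forall>\<sigma>\<in>Sn (2*m). \<forall>v\<in>Vg m. \<Phi> (act_g \<sigma> v) = act_x \<sigma> (\<Phi> v)))"
proof (intro conjI)
  show "\<forall>\<sigma>\<in>Sn (2*m). \<forall>v\<in>Vg m. act_g \<sigma> v \<in> Vg m" using Vg_inv by blast
  show "Vg m \<noteq> {\<lambda>g. 0}"
  proof
    assume "Vg m = {\<lambda>g. 0}"
    then have "gmono m id = (\<lambda>g. 0)" using gmono_Vg[OF id_Sn] by blast
    then show False using gid_P0[of m] by simp
  qed
  show "\<forall>W. W \<subseteq> Vg m \<and> qsubspace W \<and> (\<forall>\<sigma>\<in>Sn (2*m). \<forall>w\<in>W. act_g \<sigma> w \<in> W)
           \<longrightarrow> W = {\<lambda>g. 0} \<or> W = Vg m" using irred by blast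
  show "\<exists>\<Phi>. qlinear_on (Vg m) \<Phi> \<and> inj_on \<Phi> (Vg m) \<and> \<Phi> ` Vg m = Specht2 m
           \<and> (\<forall>\<sigma>\<in>Sn (2*m). \<Phi> (gmono m \<sigma>) = xmono m \<sigma>)
           \<and> (\<forall>\<sigma>\<in>Sn (2*m). \<forall>v\<in>Vg m. \<Phi> (act_g \<sigma> v) = act_x \<sigma> (\<Phi> v))"
    by (rule exI[of _ "Phi m"]) (simp add: Phi_lin Phi_inj Phi_image Phi_gmono Phi_act)
qed

end
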